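(* Let $\beta\in(0,\pi/2)$ be defined by $\cot\beta=\frac{\ln(2\pi+1)}{2\pi}$ (so $\beta\approx 1.264714$ and $\frac{1}{\cos\beta}\approx 3.3186738$), and fix $a>0$. For a starting point $s$, consider the spiral strategy: the path that, in polar coordinates centred at $s$ (with an arbitrary reference direction), follows the logarithmic spiral $\varphi\mapsto(\varphi,\,a\,e^{\varphi\cot\beta})$ for increasing $\varphi\in(-\infty,\infty)$, starting at $s$ (its arc length from $s$ up to the point with angle $\varphi$ is $\frac{a}{\cos\beta}e^{\varphi\cot\beta}$). Then for every environment $P$ and every starting point $s$ in the kernel of $P$, and for every rotation of $P$ about $s$, this spiral path reaches the boundary $\partial P$ after a path length smaller than $3.318674\cdot \Pi_s$, where $\Pi_s$ is the length of the certificate path of $P$ at $s$.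
   Context: An environment is the closed bounded region $P\subset\mathbb{R}^2$ enclosed by a closed Jordan curve $\partial P$. The kernel of $P$ is the set of points $s\in P$ such that for every $q\in P$ the segment $sq$ lies in $P$ (so from $s$ each ray meets $\partial P$ in exactly one point). For $s$ in the interior of $P$ and $x>0$, let $C_s(x)$ be the circle of radius $x$ centred at $s$. For $x$ such that $C_s(x)\cap\partial P\neq\emptyset$, let $\alpha_s(x)\in[0,2\pi]$ be the supremum of the angles of arcs of $C_s(x)$ contained in the interior of $P$ (and $0$ if there is none). A circular strategy for distance $x$ moves from $s$ straight a distance $x$ in some direction and then along $C_s(x)$ (in a fixed orientation) for an angle $\alpha_s(x)$; it meets $\partial P$ regardless of the starting direction, and has length $x(1+\alpha_s(x))$. The certificate path of $P$ at $s$ has length $\Pi_s=\min_x x(1+\alpha_s(x))$, the minimum over all $x>0$ with $C_s(x)\cap\partial P\neq\emptyset$. The path length of a strategy is measured from $s$ to the first point at which it meets $\partial P$. *)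

theory Defs
  imports "HOL-Analysis.Analysis"
begin

definition environment :: "complex set \<Rightarrow> complex set \<Rightarrow> bool" where
  "environment P B \<longleftrightarrow>
     (\<exists>g. simple_path g \<and> pathfinish g = pathstart g \<and> B = path_image g \<and> P = B \<union> inside B)"

definition kernel :: "complex set \<Rightarrow> complex set" where
  "kernel P = {s \<in> P. \<forall>q\<in>P. closed_segment s q \<subseteq> P}"

definition arc_angle :: "complex set \<Rightarrow> complex \<Rightarrow> real \<Rightarrow> real" where
  "arc_angle P s x = Sup ({0} \<union> {w. 0 \<le> w \<and> w \<le> 2 * pi \<and>
       (\<exists>\<theta>. \<forall>t\<in>{\<theta>..\<theta>+w}. s + of_real x * cis t \<in> interior P)})"

text \<open>Length of the certificate path: min (here: infimum) of x (1 + alpha(x)) over all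
x > 0 with C_s(x) meeting the boundary B.\<close>

definition certificate_length :: "complex set \<Rightarrow> complex set \<Rightarrow> complex \<Rightarrow> real" where
  "certificate_length P B s =
     Inf {x * (1 + arc_angle P s x) | x. x > 0 \<and> sphere s x \<inter> B \<noteq> {}}"

definition spiral_beta :: real where
  "spiral_beta = arctan (2 * pi / ln (2 * pi + 1))"

definition spiral :: "real \<Rightarrow> real \<Rightarrow> complex \<Rightarrow> real \<Rightarrow> complex" where
  "spiral a \<theta>0 s \<phi> = s + of_real (a * exp (\<phi> * cot spiral_beta)) * cis (\<theta>0 + \<phi>)"

definition spiral_length :: "real \<Rightarrow> real \<Rightarrow> real" where
  "spiral_length a \<phi> = a / cos spiral_beta * exp (\<phi> * cot spiral_beta)"

end

theory Submission imports Defs begin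


lemma ln_lower_partial:
  fixes x :: real assumes "x \<ge> 1"
  shows "(\<Sum>n<N. 2*((x - 1) / (x + 1)) ^ (2*n+1) / of_nat (2*n+1)) \<le> ln x"
proof -
  have s: "(\<lambda>n. (2*((x - 1) / (x + 1)) ^ (2*n+1) / of_nat (2*n+1))) sums ln x"
    using ln_series_quadratic[of x] assms by simp
  have "(\<Sum>n<N. 2*((x - 1) / (x + 1)) ^ (2*n+1) / of_nat (2*n+1))
        \<le> (\<Sum>n. 2*((x - 1) / (x + 1)) ^ (2*n+1) / of_nat (2*n+1))"
    by (rule sum_le_suminf) (use s assms in \<open>auto simp: sums_iff\<close>)
  thus ?thesis using s by (simp add: sums_iff)
qed

lemma ln2_lb: "0.69314718045 \<le> ln (2::real)"
  using ln_lower_partial[of 2 9] by (simp add: numeral_eq_Suc lessThan_Suc)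

lemma ln95_lb: "0.58778666483 \<le> ln (9/5::real)"
  using ln_lower_partial[of "9/5" 8] by (simp add: numeral_eq_Suc lessThan_Suc)

lemma lnr_lb: "0.01148727427 \<le> ln ((2*3.141592653588+1)/(36/5)::real)"
  using ln_lower_partial[of "(2*3.141592653588+1)/(36/5)" 2] by (simp add: numeral_eq_Suc lessThan_Suc)

lemma ln4: "(a::real)>0 \<Longrightarrow> b>0 \<Longrightarrow> c>0 \<Longrightarrow> d>0 \<Longrightarrow> ln(a*(b*(c*d))) = ln a + (ln b + (ln c + ln d))"
  by (simp add: ln_mult)

lemma aux4: "(A::real) \<ge> a + a + b + c \<Longrightarrow> 0.69314718045 \<le> a \<Longrightarrow> 0.58778666483 \<le> b \<Longrightarrow> 0.01148727427 \<le> c \<Longrightarrow> 1.9855683 \<le> A"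
  by simp

lemma L_lb: "1.9855683 \<le> ln (2*pi+1)"
proof -
  have "ln (2*pi+1) \<ge> ln (2*3.141592653588+1)"
    using pi_approx by simp
  moreover have "ln (2*3.141592653588+1::real) = ln 2 + ln 2 + ln (9/5) + ln ((2*3.141592653588+1)/(36/5))"
  proof -
    have "(2*3.141592653588+1::real) = 2 * (2 * ((9/5) * ((2*3.141592653588+1)/(36/5))))" by simp
    hence "ln (2*3.141592653588+1::real) = ln (2 * (2 * ((9/5) * ((2*3.141592653588+1)/(36/5)))))" by metis
    also have "\<dots> = ln 2 + (ln 2 + (ln (9/5) + ln ((2*3.141592653588+1)/(36/5))))"
      by (rule ln4) simp_all
    finally show ?thesis by simp
  qed
  ultimately have "ln (2*pi+1) \<ge> ln 2 + ln 2 + ln (9/5) + ln ((2*3.141592653588+1)/(36/5))" by simp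
  from aux4[OF this ln2_lb ln95_lb lnr_lb] show ?thesis .
qed



lemma beta_facts:
  shows "cot spiral_beta = ln (2*pi+1) / (2*pi)"
    and "cos spiral_beta > 0"
    and "3.318674 * cos spiral_beta > 1"
proof -
  define L where "L = ln (2*pi+1)"
  have L0: "1.9855683 \<le> L" using L_lb L_def by simp
  define u where "u = 2*pi / L"
  have u: "u > 0" using L0 by (simp add: u_def)
  have sb: "spiral_beta = arctan u" by (simp add: spiral_beta_def u_def L_def)
  have nz: "sqrt (1 + u\<^sup>2) \<noteq> 0" by (smt (verit) real_sqrt_gt_zero zero_le_power2)
  show "cot spiral_beta = ln (2*pi+1) / (2*pi)"
    using nz unfolding sb cot_def cos_arctan sin_arctan using u L0 by (simp add: u_def L_def[symmetric])
  have cb: "cos spiral_beta = 1 / sqrt (1 + u\<^sup>2)" by (simp add: sb cos_arctan)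
  have pos: "0 < 1 + u\<^sup>2" by (smt (verit) zero_le_power2)
  show "cos spiral_beta > 0" using pos by (simp add: cb)
  have "(2*pi)^2 \<le> (2*3.1415926535899)^2" using pi_approx by (intro power_mono) auto
  also have "\<dots> < 1.9855683^2 * (3.318674^2 - 1)" by (simp add: power2_eq_square)
  also have "\<dots> \<le> L^2 * (3.318674^2 - 1)" using L0 by (intro mult_right_mono power_mono) auto
  finally have "(2*pi)^2 < L^2 * (3.318674^2 - 1)" .
  hence "u^2 < 3.318674^2 - 1" using L0 by (simp add: u_def power_divide field_simps)
  hence "1 + u^2 < 3.318674^2" by simp
  hence "sqrt (1 + u^2) < sqrt (3.318674^2)" by (subst real_sqrt_less_iff) 
  hence "sqrt (1 + u^2) < 3.318674" by simp
  thus "3.318674 * cos spiral_beta > 1" using pos by (simp add: cb field_simps)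
qed



lemma star_interior:
  assumes "s \<in> kernel P" "z \<in> interior P" "0 < l" "l \<le> 1"
  shows "s + of_real l * (z - s) \<in> interior P"
proof -
  obtain d where d: "d > 0" "ball z d \<subseteq> P" using assms(2) by (meson mem_interior)
  have "ball (s + of_real l * (z - s)) (l*d) \<subseteq> P"
  proof
    fix p assume p: "p \<in> ball (s + of_real l * (z - s)) (l*d)"
    define q where "q = s + (p - s) / of_real l"
    have "dist z q = norm (of_real l * (z - s) - (p - s)) / l"
    proof -
      have "z - q = (of_real l * (z - s) - (p - s)) / of_real l"
        using assms(3) by (simp add: q_def field_simps)
      thus ?thesis using assms(3) by (simp add: dist_norm norm_divide)
    qed
    also have "norm (of_real l * (z - s) - (p - s)) = dist (s + of_real l * (z - s)) p"
      by (simp add: dist_norm algebra_simps)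
    finally have E: "dist z q = dist (s + of_real l * (z - s)) p / l" .
    have "dist (s + of_real l * (z - s)) p / l < (l*d) / l"
      using p assms(3) by (intro divide_strict_right_mono) auto
    hence "dist z q < d" using E assms(3) by simp
    hence qP: "q \<in> P" using d by auto
    have "closed_segment s q \<subseteq> P" using assms(1) qP by (auto simp: kernel_def)
    moreover have "p \<in> closed_segment s q"
    proof -
      have "p = (1 - l) *\<^sub>R s + l *\<^sub>R q"
        using assms(3) by (simp add: q_def scaleR_conv_of_real field_simps)
      thus ?thesis using assms(3,4) unfolding in_segment by (intro conjI exI[of _ l]) auto
    qed
    ultimately show "p \<in> P" by blast
  qed
  thus ?thesis using assms(3) d(1) by (meson mem_interior mult_pos_pos)
qed

lemma env_facts:
  assumes "environment P B"
  shows "closed P" "bounded P" "B \<noteq> {}" "closed B" "B \<inter> interior P = {}" "P - interior P \<subseteq> B"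
proof -
  obtain g where g: "simple_path g" "pathfinish g = pathstart g" "B = path_image g" "P = B \<union> inside B"
    using assms by (auto simp: environment_def)
  note J = Jordan_inside_outside[OF g(1,2), folded g(3)]
  have cB: "compact B" using g by (simp add: compact_simple_path_image)
  show "closed B" using cB compact_imp_closed by blast
  show "B \<noteq> {}" using g by (simp add: path_image_nonempty)
  have "closure (inside B) \<subseteq> B \<union> inside B" using closure_inside_subset \<open>closed B\<close> by blast
  hence "P = B \<union> closure (inside B)" using g(4) closure_subset by blast
  thus "closed P" using \<open>closed B\<close> by auto
  show "bounded P" using g(4) cB by (simp add: bounded_inside compact_imp_bounded)
  have "inside B \<subseteq> interior P" using J g(4) by (simp add: interior_maximal)
  thus "P - interior P \<subseteq> B" using g(4) by blast
  show "B \<inter> interior P = {}"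
  proof (rule ccontr)
    assume "B \<inter> interior P \<noteq> {}"
    then obtain b where b: "b \<in> B" "b \<in> interior P" by blast
    obtain e where e: "e > 0" "ball b e \<subseteq> P" using b(2) by (meson mem_interior)
    have "b \<in> closure (outside B)" using J b(1) by (metis Diff_iff frontier_def)
    then obtain y where y: "y \<in> outside B" "dist y b < e" using e(1) closure_approachable by blast
    have "y \<in> P" using e y by (auto simp: dist_commute)
    thus False using y(1) J g(4) outside_no_overlap by blast
  qed
qed

lemma circle_rep:
  fixes z s :: complex
  assumes "norm (z - s) = x" "x > 0"
  shows "\<exists>t\<in>{c..c+2*pi}. z = s + of_real x * cis t"
proof -
  have nz: "z - s \<noteq> 0" using assms by auto
  define th where "th = Arg (z - s)"
  have cth: "cis th = (z - s) / of_real x"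
    using cis_Arg[OF nz] assms by (simp add: th_def sgn_div_norm scaleR_conv_of_real field_simps)
  define n where "n = ceiling ((c - th) / (2*pi))"
  have n1: "(c - th) / (2*pi) \<le> n" and n2: "n < (c - th) / (2*pi) + 1"
    unfolding n_def by linarith+
  define t where "t = th + 2*pi * of_int n"
  have "c \<le> t" using n1 pi_gt_zero by (simp add: t_def field_simps)
  moreover have "t \<le> c + 2*pi" using n2 pi_gt_zero by (simp add: t_def field_simps)
  moreover have "cis t = cis th"
    by (simp add: t_def cis_mult[symmetric])
  ultimately show ?thesis using cth assms(2) by (intro bexI[of _ t]) (auto simp: field_simps)
qed



theorem theorem1:
  fixes P B :: "complex set" and s :: complex and a \<theta>0 :: real
  assumes "environment P B"
    and "s \<in> kernel P"
    and "s \<in> interior P"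
    and "a > 0"
  shows "\<exists>\<phi>. spiral a \<theta>0 s \<phi> \<in> B \<and>
           spiral_length a \<phi> < 3.318674 * certificate_length P B s"
proof -
  note E = env_facts[OF assms(1)]
  define k where "k = cot spiral_beta"
  define cb where "cb = cos spiral_beta"
  have k_eq: "k = ln (2*pi+1) / (2*pi)" using beta_facts(1) k_def by simp
  have lnpos: "ln (2*pi+1) > 0" using pi_gt_zero by (intro ln_gt_zero) linarith
  have kpos: "k > 0" using k_eq lnpos by simp
  have cbpos: "cb > 0" using beta_facts(2) cb_def by simp
  define m where "m = 3.318674 * cb"
  have m1: "m > 1" using beta_facts(3) m_def cb_def by simp
  define eps where "eps = ln ((1+m)/2) / k"
  have eps_pos: "eps > 0" using m1 kpos by (simp add: eps_def)
  have exp_eps: "exp (eps * k) = (1+m)/2" using kpos m1 by (simp add: eps_def)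
  define C where "C = (1+m) / (2*cb)"
  have C_lt: "C < 3.318674" using m1 cbpos by (simp add: C_def m_def field_simps)
  have Cpos: "C > 0" using m1 cbpos by (simp add: C_def)
  define sp where "sp = spiral a \<theta>0 s"
  define R where "R = (\<lambda>\<phi>. a * exp (\<phi> * k))"
  have sp_eq: "sp \<phi> = s + of_real (R \<phi>) * cis (\<theta>0 + \<phi>)" for \<phi>
    by (simp add: sp_def spiral_def R_def k_def)
  have len_eq: "spiral_length a \<phi> = R \<phi> / cb" for \<phi>
    by (simp add: spiral_length_def R_def k_def cb_def)
  have Rpos: "R \<phi> > 0" for \<phi> using assms(4) by (simp add: R_def)
  have Rmono: "\<phi> \<le> \<psi> \<Longrightarrow> R \<phi> \<le> R \<psi>" for \<phi> \<psi>
    using assms(4) kpos by (simp add: R_def mult_right_mono)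
  have norm_sp: "norm (sp \<phi> - s) = R \<phi>" for \<phi>
    using Rpos[of \<phi>] by (simp add: sp_eq norm_mult)
  have cont: "continuous_on UNIV sp"
    unfolding sp_def spiral_def by (intro continuous_intros)
  obtain r where r: "r > 0" "ball s r \<subseteq> interior P"
    using assms(3) open_interior open_contains_ball by blast
  define \<phi>1 where "\<phi>1 = ln (r / (2*a)) / k"
  have R1: "R \<phi>1 = r/2" using kpos assms(4) r(1) by (simp add: R_def \<phi>1_def)
  have small: "sp \<phi> \<in> interior P" if "\<phi> \<le> \<phi>1" for \<phi>
  proof -
    have "R \<phi> < r" using Rmono[OF that] R1 r(1) by simp
    hence "sp \<phi> \<in> ball s r" using norm_sp[of \<phi>] by (simp add: dist_norm norm_minus_commute)
    thus ?thesis using r by blast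
  qed
  define Eset where "Eset = {\<phi>. sp \<phi> \<in> B}"
  have Eclosed: "closed Eset"
  proof -
    have "Eset = sp -` B" by (auto simp: Eset_def)
    moreover have "closed (sp -` B)"
      by (rule continuous_closed_vimage[OF E(4)]) (use cont continuous_on_eq_continuous_at in blast)
    ultimately show ?thesis by simp
  qed
  have Ebdd: "bdd_below Eset"
  proof
    fix \<phi> assume "\<phi> \<in> Eset"
    hence "sp \<phi> \<in> B" by (simp add: Eset_def)
    hence "\<not> \<phi> \<le> \<phi>1" using small E(5) by blast
    thus "\<phi>1 \<le> \<phi>" by simp
  qed
  have hit: "\<exists>\<phi>\<in>Eset. \<phi> \<le> t" if t: "sp t \<notin> interior P" for t
  proof -
    have t1: "\<phi>1 \<le> t" using small[of t] t by linarith
    define S where "S = sp ` {\<phi>1..t}"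
    have cS: "connected S" unfolding S_def
      by (intro connected_continuous_image continuous_on_subset[OF cont]) auto
    have m1: "sp \<phi>1 \<in> S" "sp t \<in> S" using t1 by (auto simp: S_def)
    have m2: "S \<inter> interior P \<noteq> {}" using small[of \<phi>1] m1 by blast
    have m3: "S - interior P \<noteq> {}" using t m1 by blast
    have "S \<inter> frontier (interior P) \<noteq> {}" by (rule connected_Int_frontier[OF cS m2 m3])
    moreover have "frontier (interior P) \<subseteq> B"
    proof -
      have "closure (interior P) \<subseteq> P" using E(1) by (simp add: closure_minimal interior_subset)
      thus ?thesis using E(6) by (auto simp: frontier_def)
    qed
    ultimately obtain \<phi> where "\<phi> \<in> {\<phi>1..t}" "sp \<phi> \<in> B" unfolding S_def by blast
    thus ?thesis by (auto simp: Eset_def)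
  qed
  have key: "\<exists>t. sp t \<notin> interior P \<and> t \<le> ln (x/a) / k + arc_angle P s x + eps"
    if x: "x > 0" "sphere s x \<inter> B \<noteq> {}" for x
  proof -
    define \<phi>0 where "\<phi>0 = ln (x/a) / k"
    have R0: "R \<phi>0 = x" using kpos assms(4) x(1) by (simp add: R_def \<phi>0_def)
    define A where "A = {w. 0 \<le> w \<and> w \<le> 2 * pi \<and>
       (\<exists>\<theta>. \<forall>t\<in>{\<theta>..\<theta>+w}. s + of_real x * cis t \<in> interior P)}"
    have al: "arc_angle P s x = Sup ({0} \<union> A)" by (simp add: arc_angle_def A_def)
    have bddA: "bdd_above ({0} \<union> A)" by (rule bdd_aboveI[of _ "2*pi"]) (auto simp: A_def)
    have transfer: "sp t \<notin> interior P" if "t \<ge> \<phi>0" "s + of_real x * cis (\<theta>0 + t) \<notin> interior P" for t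
    proof
      assume "sp t \<in> interior P"
      from star_interior[OF assms(2) this, of "x / R t"]
      have "s + of_real (x / R t) * (sp t - s) \<in> interior P"
        using Rpos[of t] Rmono[OF that(1)] R0 x(1) by simp
      moreover have "s + of_real (x / R t) * (sp t - s) = s + of_real x * cis (\<theta>0 + t)"
        using Rpos[of t] by (simp add: sp_eq)
      ultimately show False using that(2) by simp
    qed
    show ?thesis
    proof (cases "arc_angle P s x + eps \<le> 2*pi")
      case True
      define w where "w = arc_angle P s x + eps"
      have "0 \<le> arc_angle P s x" unfolding al by (rule cSup_upper[OF _ bddA]) simp
      hence w0: "0 \<le> w" using eps_pos by (simp add: w_def)
      have "\<exists>t\<in>{\<phi>0..\<phi>0+w}. s + of_real x * cis (\<theta>0 + t) \<notin> interior P"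
      proof (rule ccontr)
        assume "\<not> ?thesis"
        hence all: "\<forall>t\<in>{\<phi>0..\<phi>0+w}. s + of_real x * cis (\<theta>0 + t) \<in> interior P" by blast
        have "\<forall>t\<in>{\<theta>0+\<phi>0..\<theta>0+\<phi>0+w}. s + of_real x * cis t \<in> interior P"
        proof
          fix t assume "t \<in> {\<theta>0+\<phi>0..\<theta>0+\<phi>0+w}"
          hence "t - \<theta>0 \<in> {\<phi>0..\<phi>0+w}" by auto
          from all[rule_format, OF this] show "s + of_real x * cis t \<in> interior P" by simp
        qed
        hence "w \<in> A" using w0 True by (auto simp: A_def w_def)
        hence "w \<le> arc_angle P s x" unfolding al by (intro cSup_upper[OF _ bddA]) auto
        thus False using eps_pos by (simp add: w_def)
      qed
      then obtain t where "t \<in> {\<phi>0..\<phi>0+w}" "s + of_real x * cis (\<theta>0 + t) \<notin> interior P" by blast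
      thus ?thesis using transfer by (intro exI[of _ t]) (auto simp: w_def \<phi>0_def)
    next
      case False
      obtain b where b0: "b \<in> B" "dist s b = x" using x(2) unfolding sphere_def by blast
      have b: "b \<in> B" "norm (b - s) = x" using b0 by (auto simp: dist_norm norm_minus_commute)
      obtain t' where t': "t' \<in> {\<theta>0+\<phi>0..\<theta>0+\<phi>0+2*pi}" "b = s + of_real x * cis t'"
        using circle_rep[OF b(2) x(1)] by blast
      have "b \<notin> interior P" using b(1) E(5) by blast
      hence "sp (t' - \<theta>0) \<notin> interior P" using transfer[of "t' - \<theta>0"] t' by auto
      moreover have "t' - \<theta>0 \<le> \<phi>0 + arc_angle P s x + eps" using t' False by auto
      ultimately show ?thesis by (auto simp: \<phi>0_def)
    qed
  qed
  obtain b where b: "b \<in> B" using E(3) by blast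
  define xb where "xb = dist s b"
  have xb: "xb > 0" using b E(5) assms(3) by (auto simp: xb_def)
  have xbB: "sphere s xb \<inter> B \<noteq> {}" using b by (auto simp: xb_def)
  obtain tb where "sp tb \<notin> interior P" using key[OF xb xbB] by blast
  then obtain \<phi>b where "\<phi>b \<in> Eset" using hit by blast
  hence Ene: "Eset \<noteq> {}" by blast
  define \<phi>s where "\<phi>s = Inf Eset"
  have \<phi>sE: "\<phi>s \<in> Eset" unfolding \<phi>s_def by (rule closed_contains_Inf[OF Ene Ebdd Eclosed])
  have \<phi>s_le: "\<phi>s \<le> t" if tt: "sp t \<notin> interior P" for t
  proof -
    obtain \<phi> where "\<phi> \<in> Eset" "\<phi> \<le> t" using hit[OF tt] by blast
    thus ?thesis unfolding \<phi>s_def using cInf_lower[OF _ Ebdd] by fastforce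
  qed
  define SS where "SS = {x * (1 + arc_angle P s x) | x. x > 0 \<and> sphere s x \<inter> B \<noteq> {}}"
  have cert: "certificate_length P B s = Inf SS" by (simp add: certificate_length_def SS_def)
  have bound: "spiral_length a \<phi>s / C \<le> y" if yS: "y \<in> SS" for y
  proof -
    obtain x where x: "y = x * (1 + arc_angle P s x)" "x > 0" "sphere s x \<inter> B \<noteq> {}"
      using yS unfolding SS_def by blast
    define \<alpha> where "\<alpha> = arc_angle P s x"
    define A where "A = {w. 0 \<le> w \<and> w \<le> 2 * pi \<and>
       (\<exists>\<theta>. \<forall>t\<in>{\<theta>..\<theta>+w}. s + of_real x * cis t \<in> interior P)}"
    have al: "\<alpha> = Sup ({0} \<union> A)" by (simp add: \<alpha>_def arc_angle_def A_def)
    have bddA: "bdd_above ({0} \<union> A)" by (rule bdd_aboveI[of _ "2*pi"]) (auto simp: A_def)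
    have a0: "0 \<le> \<alpha>" unfolding al by (rule cSup_upper[OF _ bddA]) simp
    have a2: "\<alpha> \<le> 2*pi" unfolding al by (rule cSup_least) (auto simp: A_def)
    obtain t where t: "sp t \<notin> interior P" "t \<le> ln (x/a) / k + \<alpha> + eps"
      using key[OF x(2,3)] by (auto simp: \<alpha>_def)
    have "\<phi>s \<le> ln (x/a) / k + \<alpha> + eps" using \<phi>s_le[OF t(1)] t(2) by simp
    hence "R \<phi>s \<le> R (ln (x/a) / k + \<alpha> + eps)" by (rule Rmono)
    also have "\<dots> = x * exp (\<alpha> * k) * exp (eps * k)"
      using kpos assms(4) x(2) by (simp add: R_def distrib_right exp_add)
    also have "exp (\<alpha> * k) \<le> 1 + \<alpha>"
    proof -
      define u where "u = \<alpha> / (2*pi)"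
      have u: "0 \<le> u" "u \<le> 1" using a0 a2 by (auto simp: u_def)
      have "exp ((1 - u) *\<^sub>R 0 + u *\<^sub>R (2*pi*k)) \<le> (1-u) * exp 0 + u * exp (2*pi*k)"
        by (rule convex_onD[OF exp_convex]) (use u in auto)
      moreover have "(1 - u) *\<^sub>R 0 + u *\<^sub>R (2*pi*k) = \<alpha> * k" using pi_gt_zero by (simp add: u_def)
      moreover have "exp (2*pi*k) = 2*pi+1" using k_eq pi_gt_zero by (simp add: add_pos_pos)
      ultimately have "exp (\<alpha> * k) \<le> (1-u) * 1 + u * (2*pi+1)" by (metis exp_zero)
      moreover have "(1-u) * 1 + u * (2*pi+1) = 1 + \<alpha>" using pi_gt_zero by (simp add: u_def field_simps)
      ultimately show ?thesis by simp
    qed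
    hence "x * exp (\<alpha> * k) * exp (eps * k) \<le> x * (1 + \<alpha>) * exp (eps * k)"
      using x(2) by (intro mult_right_mono mult_left_mono) auto
    finally have "R \<phi>s \<le> x * (1 + \<alpha>) * ((1+m)/2)" by (simp add: exp_eps)
    hence "R \<phi>s / cb \<le> x * (1 + \<alpha>) * C"
      using cbpos by (simp add: C_def field_simps)
    hence "spiral_length a \<phi>s \<le> C * y" using x(1) by (simp add: len_eq \<alpha>_def mult.commute)
    thus ?thesis using Cpos by (simp add: pos_divide_le_eq mult.commute)
  qed
  have SSne: "SS \<noteq> {}" using xb xbB by (auto simp: SS_def)
  have "spiral_length a \<phi>s / C \<le> Inf SS" by (rule cInf_greatest[OF SSne bound])
  hence "spiral_length a \<phi>s \<le> C * certificate_length P B s"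
    using Cpos by (simp add: cert field_simps)
  moreover have "spiral_length a \<phi>s > 0" using Rpos cbpos by (simp add: len_eq)
  ultimately have "C * certificate_length P B s > 0" by linarith
  hence cpos: "certificate_length P B s > 0" using Cpos by (simp add: zero_less_mult_iff)
  have "C * certificate_length P B s < 3.318674 * certificate_length P B s"
    using C_lt cpos by (intro mult_strict_right_mono) auto
  hence "spiral_length a \<phi>s < 3.318674 * certificate_length P B s"
    using \<open>spiral_length a \<phi>s \<le> C * certificate_length P B s\<close> by linarith
  moreover have "spiral a \<theta>0 s \<phi>s \<in> B" using \<phi>sE by (simp add: Eset_def sp_def)
  ultimately show ?thesis by blast
qed

end
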